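(* Let $(A,\mu,\alpha)$ be a commutative Hom-associative algebra, $k$ a natural number, and $D:A\to A$ a linear map commuting with $\alpha$ such that $D(ab)=D(a)\alpha^k(b)+\alpha^k(a)D(b)$ for all $a,b\in A$. Define $x\bullet y=\alpha^k(x)D(y)$. Then $(A,\bullet,\alpha^{k+1})$ is a Hom-Novikov algebra.
   Context: A Hom-associative algebra $(A,\mu,\alpha)$: linear space, bilinear $\mu(x\otimes y)=xy$, linear $\alpha$ with $\alpha(xy)=\alpha(x)\alpha(y)$ and $\alpha(x)(yz)=(xy)\alpha(z)$; commutative means $xy=yx$. A Hom-Novikov algebra $(A,\cdot,\gamma)$ is a left Hom-pre-Lie algebra, i.e. $\gamma(x\cdot y)=\gamma(x)\cdot\gamma(y)$ and $\gamma(x)\cdot(y\cdot z)-(x\cdot y)\cdot\gamma(z)=\gamma(y)\cdot(x\cdot z)-(y\cdot x)\cdot\gamma(z)$, which moreover satisfies $(x\cdot y)\cdot\gamma(z)=(x\cdot z)\cdot\gamma(y)$ for all $x,y,z$. *)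

theory Defs
  imports Complex_Main
begin

definition bilinear_mult :: "('k::field \<Rightarrow> 'a::ab_group_add \<Rightarrow> 'a) \<Rightarrow> ('a \<Rightarrow> 'a \<Rightarrow> 'a) \<Rightarrow> bool" where
  "bilinear_mult scale mu \<longleftrightarrow>
     (\<forall>x. Vector_Spaces.linear scale scale (\<lambda>y. mu x y)) \<and> (\<forall>y. Vector_Spaces.linear scale scale (\<lambda>x. mu x y))"

definition hom_assoc_algebra ::
  "('k::field \<Rightarrow> 'a::ab_group_add \<Rightarrow> 'a) \<Rightarrow> ('a \<Rightarrow> 'a \<Rightarrow> 'a) \<Rightarrow> ('a \<Rightarrow> 'a) \<Rightarrow> bool" where
  "hom_assoc_algebra scale mu alpha \<longleftrightarrow>
     Vector_Spaces.vector_space scale \<and> bilinear_mult scale mu \<and> Vector_Spaces.linear scale scale alpha \<and>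
     (\<forall>x y. alpha (mu x y) = mu (alpha x) (alpha y)) \<and>
     (\<forall>x y z. mu (alpha x) (mu y z) = mu (mu x y) (alpha z))"

definition commutative_mult :: "('a \<Rightarrow> 'a \<Rightarrow> 'a) \<Rightarrow> bool" where
  "commutative_mult mu \<longleftrightarrow> (\<forall>x y. mu x y = mu y x)"

definition hom_left_pre_lie ::
  "('k::field \<Rightarrow> 'a::ab_group_add \<Rightarrow> 'a) \<Rightarrow> ('a \<Rightarrow> 'a \<Rightarrow> 'a) \<Rightarrow> ('a \<Rightarrow> 'a) \<Rightarrow> bool" where
  "hom_left_pre_lie scale mu gamma \<longleftrightarrow>
     Vector_Spaces.vector_space scale \<and> bilinear_mult scale mu \<and> Vector_Spaces.linear scale scale gamma \<and>
     (\<forall>x y. gamma (mu x y) = mu (gamma x) (gamma y)) \<and>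
     (\<forall>x y z. mu (gamma x) (mu y z) - mu (mu x y) (gamma z)
              = mu (gamma y) (mu x z) - mu (mu y x) (gamma z))"

definition hom_novikov ::
  "('k::field \<Rightarrow> 'a::ab_group_add \<Rightarrow> 'a) \<Rightarrow> ('a \<Rightarrow> 'a \<Rightarrow> 'a) \<Rightarrow> ('a \<Rightarrow> 'a) \<Rightarrow> bool" where
  "hom_novikov scale mu gamma \<longleftrightarrow>
     hom_left_pre_lie scale mu gamma \<and>
     (\<forall>x y z. mu (mu x y) (gamma z) = mu (mu x z) (gamma y))"

end

theory Submission
  imports Defs
begin

lemma lin_pow:
  assumes vs: "Vector_Spaces.vector_space scale" and l: "Vector_Spaces.linear scale scale f"
  shows "Vector_Spaces.linear scale scale (f ^^ n)"
proof (induction n)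
  case 0 then show ?case using vector_space.linear_id[OF vs] by (simp add: id_def)
next
  case (Suc n) then show ?case
    using Vector_Spaces.linear_compose[OF Suc l] by (simp add: o_def)
qed

lemma pow_mult:
  assumes "\<forall>x y. alpha (mu x y) = mu (alpha x) (alpha y)"
  shows "(alpha ^^ n) (mu x y) = mu ((alpha ^^ n) x) ((alpha ^^ n) y)"
  using assms by (induction n) auto

lemma pow_comm:
  assumes "D \<circ> alpha = alpha \<circ> D"
  shows "D ((alpha ^^ n) x) = (alpha ^^ n) (D x)"
proof (induction n)
  case (Suc n) then show ?case using fun_cong[OF assms, of "(alpha ^^ n) x"] by simp
qed simp

theorem mainTheorem11:
  fixes scale :: "'k::field \<Rightarrow> 'a::ab_group_add \<Rightarrow> 'a"
    and mu :: "'a \<Rightarrow> 'a \<Rightarrow> 'a" and alpha D :: "'a \<Rightarrow> 'a" and k :: nat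
  assumes "hom_assoc_algebra scale mu alpha"
    and "commutative_mult mu"
    and "Vector_Spaces.linear scale scale D"
    and "D \<circ> alpha = alpha \<circ> D"
    and "\<forall>a b. D (mu a b) = mu (D a) ((alpha ^^ k) b) + mu ((alpha ^^ k) a) (D b)"
  shows "hom_novikov scale (\<lambda>x y. mu ((alpha ^^ k) x) (D y)) (alpha ^^ (k + 1))"
proof -
  define a where "a = alpha ^^ k"
  from assms(1) have vs: "Vector_Spaces.vector_space scale"
    and bl: "bilinear_mult scale mu" and la: "Vector_Spaces.linear scale scale alpha"
    and am: "\<forall>x y. alpha (mu x y) = mu (alpha x) (alpha y)"
    and ha: "\<And>x y z. mu (alpha x) (mu y z) = mu (mu x y) (alpha z)"
    unfolding hom_assoc_algebra_def by auto
  have cm: "\<And>x y. mu x y = mu y x" using assms(2) unfolding commutative_mult_def by auto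
  have lk: "Vector_Spaces.linear scale scale a" unfolding a_def by (rule lin_pow[OF vs la])
  have lk1: "Vector_Spaces.linear scale scale (alpha ^^ (k+1))" by (rule lin_pow[OF vs la])
  have amk: "\<And>x y. a (mu x y) = mu (a x) (a y)" unfolding a_def by (rule pow_mult[OF am])
  have Da: "\<And>x. D (a x) = a (D x)" unfolding a_def by (rule pow_comm[OF assms(4)])
  have Dal: "\<And>x. D (alpha x) = alpha (D x)" using fun_cong[OF assms(4)] by simp
  have aal: "\<And>x. a (alpha x) = alpha (a x)" unfolding a_def by (simp add: funpow_swap1)
  have g: "alpha ^^ (k+1) = (\<lambda>x. alpha (a x))" unfolding a_def by auto
  have Dm: "\<And>u v. D (mu u v) = mu (D u) (a v) + mu (a u) (D v)" using assms(5) a_def by auto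
  have bil: "bilinear_mult scale (\<lambda>x y. mu (a x) (D y))"
    unfolding bilinear_mult_def
  proof (intro conjI allI)
    fix x
    have "Vector_Spaces.linear scale scale (\<lambda>y. mu (a x) y)" using bl unfolding bilinear_mult_def by auto
    from Vector_Spaces.linear_compose[OF assms(3) this]
    show "Vector_Spaces.linear scale scale (\<lambda>y. mu (a x) (D y))" by (simp add: o_def)
  next
    fix y
    have "Vector_Spaces.linear scale scale (\<lambda>x. mu x (D y))" using bl unfolding bilinear_mult_def by auto
    from Vector_Spaces.linear_compose[OF lk this]
    show "Vector_Spaces.linear scale scale (\<lambda>x. mu (a x) (D y))" by (simp add: o_def)
  qed
  have mult: "\<And>x y. alpha (a (mu (a x) (D y))) = mu (a (alpha (a x))) (D (alpha (a y)))"
    by (simp add: amk am Da Dal aal)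
  have madd: "\<And>u v w. mu u (v + w) = mu u v + mu u w"
    using bl unfolding bilinear_mult_def Vector_Spaces.linear_iff by blast
  have nov: "\<And>x y z. mu (a (mu (a x) (D y))) (D (alpha (a z))) = mu (alpha (a (a x))) (mu (a (D y)) (a (D z)))"
    by (simp add: amk Dal Da aal ha)
  have pl: "\<And>x y z. mu (alpha (a (a x))) (D (mu (a y) (D z))) - mu (a (mu (a x) (D y))) (D (alpha (a z)))
      = mu (mu (a (a x)) (a (a y))) (alpha (D (D z)))"
    by (simp add: nov Dm madd Da ha)
  have pl2: "\<And>x y z. mu (a (alpha (a x))) (D (mu (a y) (D z))) - mu (a (mu (a x) (D y))) (D (alpha (a z)))
      = mu (mu (a (a x)) (a (a y))) (alpha (D (D z)))"
    using pl by (simp add: aal)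
  have sym: "\<And>x y z. mu (mu (a (a x)) (a (a y))) (alpha (D (D z))) = mu (mu (a (a y)) (a (a x))) (alpha (D (D z)))"
    using cm by metis
  have nsym: "\<And>x y z. mu (alpha (a (a x))) (mu (a (D y)) (a (D z))) = mu (alpha (a (a x))) (mu (a (D z)) (a (D y)))"
    using cm by metis
  have mult2: "\<And>x y. alpha (a (mu (a x) (D y))) = mu (a (alpha (a x))) (D (alpha (a y)))"
    using mult by (simp add: aal)
  show ?thesis
    unfolding hom_novikov_def hom_left_pre_lie_def g a_def[symmetric]
    using vs bil lk1 g pl2 sym nov nsym mult2 by (simp add: a_def)
qed

end
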